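(* Let $G$ be a profinite group satisfying the maximum condition on closed subgroups. (i) If $H$ is an orbital closed subgroup of $G$, then $\mathrm{i}_G(H)$ is an isolated orbital closed subgroup of $G$; moreover, if $H$ is normal in $G$ then so is $\mathrm{i}_G(H)$. (ii) If $G$ is orbitally sound and $H$ is a closed subgroup of finite index in $G$, then $H$ is orbitally sound.
   Context: A closed subgroup $H$ of a profinite group $G$ is $G$-orbital if $\mathbf{N}_G(H)$ is open in $G$. An orbital closed subgroup $H$ is isolated orbital if for every orbital closed subgroup $H'$ with $H\lneq H'\le G$ we have $[H':H]=\infty$. $G$ is orbitally sound if every isolated orbital closed subgroup of $G$ is normal. For an orbital closed subgroup $H$ of $G$, its isolator $\mathrm{i}_G(H)$ is the closed subgroup generated by all orbital closed subgroups $L$ of $G$ with $H\le L$ and $[L:H]<\infty$. *)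

theory Defs
  imports "HOL-Analysis.Analysis" "HOL-Algebra.Group_Action"
begin

definition topological_group :: "('a, 'b) monoid_scheme \<Rightarrow> 'a topology \<Rightarrow> bool" where
  "topological_group G T \<longleftrightarrow> group G \<and> topspace T = carrier G \<and>
     continuous_map (prod_topology T T) T (\<lambda>p. fst p \<otimes>\<^bsub>G\<^esub> snd p) \<and>
     continuous_map T T (\<lambda>x. inv\<^bsub>G\<^esub> x)"

definition profinite_group :: "('a, 'b) monoid_scheme \<Rightarrow> 'a topology \<Rightarrow> bool" where
  "profinite_group G T \<longleftrightarrow> topological_group G T \<and> compact_space T \<and> Hausdorff_space T \<and>
     (\<forall>x \<in> topspace T. connected_component_of_set T x = {x})"

definition closed_subgroup :: "('a, 'b) monoid_scheme \<Rightarrow> 'a topology \<Rightarrow> 'a set \<Rightarrow> bool" where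
  "closed_subgroup G T H \<longleftrightarrow> subgroup H G \<and> closedin T H"

definition max_cond_closed :: "('a, 'b) monoid_scheme \<Rightarrow> 'a topology \<Rightarrow> bool" where
  "max_cond_closed G T \<longleftrightarrow>
     (\<forall>S. S \<noteq> {} \<and> (\<forall>H \<in> S. closed_subgroup G T H) \<longrightarrow>
        (\<exists>M \<in> S. \<forall>H \<in> S. M \<subseteq> H \<longrightarrow> H = M))"

definition fin_index :: "('a, 'b) monoid_scheme \<Rightarrow> 'a set \<Rightarrow> 'a set \<Rightarrow> bool" where
  "fin_index G K H \<longleftrightarrow> finite {H #>\<^bsub>G\<^esub> x | x. x \<in> K}"

definition orbital :: "('a, 'b) monoid_scheme \<Rightarrow> 'a topology \<Rightarrow> 'a set \<Rightarrow> bool" where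
  "orbital G T H \<longleftrightarrow> closed_subgroup G T H \<and> openin T (normalizer G H)"

definition isolated_orbital :: "('a, 'b) monoid_scheme \<Rightarrow> 'a topology \<Rightarrow> 'a set \<Rightarrow> bool" where
  "isolated_orbital G T H \<longleftrightarrow> orbital G T H \<and>
     (\<forall>H'. orbital G T H' \<and> H \<subset> H' \<longrightarrow> \<not> fin_index G H' H)"

definition orbitally_sound :: "('a, 'b) monoid_scheme \<Rightarrow> 'a topology \<Rightarrow> bool" where
  "orbitally_sound G T \<longleftrightarrow> (\<forall>H. isolated_orbital G T H \<longrightarrow> H \<lhd> G)"

definition closed_generate :: "('a, 'b) monoid_scheme \<Rightarrow> 'a topology \<Rightarrow> 'a set \<Rightarrow> 'a set" where
  "closed_generate G T X = \<Inter> {K. closed_subgroup G T K \<and> X \<subseteq> K}"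

definition isolator :: "('a, 'b) monoid_scheme \<Rightarrow> 'a topology \<Rightarrow> 'a set \<Rightarrow> 'a set" where
  "isolator G T H = closed_generate G T
     (\<Union> {L. orbital G T L \<and> H \<subseteq> L \<and> fin_index G L H})"

end

theory Submission
  imports Defs "HOL-Algebra.Generated_Groups"
begin

lemma finite_factor:
  assumes "finite {K #>\<^bsub>G\<^esub> x | x. x \<in> L}"
    and "\<And>x y. x \<in> L \<Longrightarrow> y \<in> L \<Longrightarrow> K #>\<^bsub>G\<^esub> x = K #>\<^bsub>G\<^esub> y \<Longrightarrow> f x = f y"
  shows "finite {f x | x. x \<in> L}"
proof -
  let ?r = "\<lambda>Y. SOME x. x \<in> L \<and> K #>\<^bsub>G\<^esub> x = Y"
  have "{f x | x. x \<in> L} \<subseteq> (\<lambda>Y. f (?r Y)) ` {K #>\<^bsub>G\<^esub> x | x. x \<in> L}"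
  proof
    fix z assume "z \<in> {f x | x. x \<in> L}"
    then obtain x where x: "x \<in> L" "z = f x" by blast
    have "\<exists>y. y \<in> L \<and> K #>\<^bsub>G\<^esub> y = K #>\<^bsub>G\<^esub> x" using x by blast
    then have "?r (K #>\<^bsub>G\<^esub> x) \<in> L \<and> K #>\<^bsub>G\<^esub> ?r (K #>\<^bsub>G\<^esub> x) = K #>\<^bsub>G\<^esub> x"
      by (rule someI_ex)
    then have "f (?r (K #>\<^bsub>G\<^esub> x)) = f x" using assms(2) x(1) by blast
    then show "z \<in> (\<lambda>Y. f (?r Y)) ` {K #>\<^bsub>G\<^esub> x | x. x \<in> L}" using x
      by (intro image_eqI[where x="K #>\<^bsub>G\<^esub> x"]) auto
  qed
  then show ?thesis using assms(1) finite_surj by blast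
qed

lemma (in group) coset_eq_iff:
  assumes "subgroup K G" "x \<in> carrier G" "y \<in> carrier G"
  shows "K #> x = K #> y \<longleftrightarrow> x \<otimes> inv y \<in> K"
proof
  assume "K #> x = K #> y"
  then have "x \<in> K #> y" using rcos_self[OF assms(2,1)] by simp
  then show "x \<otimes> inv y \<in> K" using subgroup.rcos_module_imp[OF assms(1) is_group assms(3)] by blast
next
  assume "x \<otimes> inv y \<in> K"
  then have "x \<in> K #> y" using subgroup.rcos_module_rev[OF assms(1) is_group assms(3,2)] by blast
  then show "K #> x = K #> y" using repr_independence[OF _ assms(3,1)] by simp
qed

lemma (in group) fin_index_mono:
  assumes "subgroup K G" "subgroup K' G" "K \<subseteq> K'" "L \<subseteq> carrier G" "fin_index G L K"
  shows "fin_index G L K'"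
  unfolding fin_index_def
proof (rule finite_factor[of G K L])
  show "finite {K #> x |x. x \<in> L}" using assms(5) by (simp add: fin_index_def)
  fix x y assume "x \<in> L" "y \<in> L" "K #> x = K #> y"
  then show "K' #> x = K' #> y" using coset_eq_iff assms by (meson subsetD)
qed

lemma (in group) fin_index_restrict:
  assumes "subgroup K G" "subgroup M G" "M \<subseteq> L" "L \<subseteq> carrier G" "fin_index G L K"
  shows "fin_index G M (M \<inter> K)"
  unfolding fin_index_def
proof (rule finite_factor[of G K M])
  have "{K #> x |x. x \<in> M} \<subseteq> {K #> x |x. x \<in> L}" using assms(3) by blast
  then show "finite {K #> x |x. x \<in> M}" using assms(5) by (simp add: fin_index_def finite_subset)
  have sMK: "subgroup (M \<inter> K) G" using assms(1,2) subgroups_Inter_pair by blast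
  fix x y assume xy: "x \<in> M" "y \<in> M" "K #> x = K #> y"
  have c: "x \<in> carrier G" "y \<in> carrier G" using xy assms(2) subgroup.subset by blast+
  have "x \<otimes> inv y \<in> K" using coset_eq_iff[OF assms(1) c] xy by simp
  moreover have "x \<otimes> inv y \<in> M" using xy assms(2) by (simp add: subgroup.m_closed subgroup.m_inv_closed)
  ultimately show "(M \<inter> K) #> x = (M \<inter> K) #> y" using coset_eq_iff[OF sMK c] by simp
qed

lemma (in group) fin_index_trans:
  assumes "subgroup K G" "subgroup M G" "K \<subseteq> M" "M \<subseteq> L" "L \<subseteq> carrier G"
    "fin_index G L M" "fin_index G M K"
  shows "fin_index G L K"
proof -
  let ?r = "\<lambda>Y. SOME t. t \<in> L \<and> M #> t = Y"
  let ?R = "?r ` {M #> x |x. x \<in> L}"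
  have fR: "finite ?R" using assms(6) by (simp add: fin_index_def)
  have fK: "finite {K #> x |x. x \<in> M}" using assms(7) by (simp add: fin_index_def)
  have "{K #> x |x. x \<in> L} \<subseteq> (\<lambda>(Y, t). Y #> t) ` ({K #> x |x. x \<in> M} \<times> ?R)"
  proof
    fix Z assume "Z \<in> {K #> x |x. x \<in> L}"
    then obtain x where x: "x \<in> L" "Z = K #> x" by blast
    have "\<exists>t. t \<in> L \<and> M #> t = M #> x" using x by blast
    then have t: "?r (M #> x) \<in> L \<and> M #> ?r (M #> x) = M #> x" by (rule someI_ex)
    define t where "t = ?r (M #> x)"
    have tL: "t \<in> L" "M #> t = M #> x" using t t_def by auto
    have c: "x \<in> carrier G" "t \<in> carrier G" using x tL assms(5) by auto
    have m: "x \<otimes> inv t \<in> M" using coset_eq_iff[OF assms(2) c] tL by simp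
    have "K #> x = (K #> (x \<otimes> inv t)) #> t"
      using coset_mult_assoc[of K "x \<otimes> inv t" t] c subgroup.subset[OF assms(1)]
      by (simp add: m_assoc)
    moreover have "t \<in> ?R" using t_def x by blast
    ultimately show "Z \<in> (\<lambda>(Y, t). Y #> t) ` ({K #> x |x. x \<in> M} \<times> ?R)"
      using x m by (auto intro!: image_eqI[where x="(K #> (x \<otimes> inv t), t)"])
  qed
  then show ?thesis unfolding fin_index_def using fR fK finite_subset by blast
qed

lemma (in group) cancel_simps[simp]:
  "x \<in> carrier G \<Longrightarrow> y \<in> carrier G \<Longrightarrow> x \<otimes> (inv x \<otimes> y) = y"
  "x \<in> carrier G \<Longrightarrow> y \<in> carrier G \<Longrightarrow> inv x \<otimes> (x \<otimes> y) = y"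
  by (simp_all add: m_assoc[symmetric])

definition cj :: "('a, 'b) monoid_scheme \<Rightarrow> 'a \<Rightarrow> 'a set \<Rightarrow> 'a set" where
  "cj G g X = (\<lambda>x. inv\<^bsub>G\<^esub> g \<otimes>\<^bsub>G\<^esub> x \<otimes>\<^bsub>G\<^esub> g) ` X"

lemma (in group) cj_mem:
  assumes "X \<subseteq> carrier G" "g \<in> carrier G"
  shows "y \<in> cj G g X \<longleftrightarrow> y \<in> carrier G \<and> g \<otimes> y \<otimes> inv g \<in> X"
proof
  assume "y \<in> cj G g X"
  then obtain x where x: "x \<in> X" "y = inv g \<otimes> x \<otimes> g" unfolding cj_def by blast
  have xc: "x \<in> carrier G" using x assms by blast
  have "g \<otimes> y \<otimes> inv g = x" using x xc assms by (simp add: m_assoc)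
  then show "y \<in> carrier G \<and> g \<otimes> y \<otimes> inv g \<in> X" using x xc assms by simp
next
  assume a: "y \<in> carrier G \<and> g \<otimes> y \<otimes> inv g \<in> X"
  have "y = inv g \<otimes> (g \<otimes> y \<otimes> inv g) \<otimes> g" using a assms by (simp add: m_assoc)
  then show "y \<in> cj G g X" unfolding cj_def using a by blast
qed

lemma (in group) cj_carrier: "X \<subseteq> carrier G \<Longrightarrow> g \<in> carrier G \<Longrightarrow> cj G g X \<subseteq> carrier G"
  unfolding cj_def by auto

lemma (in group) cj_one: "X \<subseteq> carrier G \<Longrightarrow> cj G \<one> X = X"
  unfolding cj_def by (force simp: image_iff)

lemma (in group) cj_mult:
  assumes "X \<subseteq> carrier G" "g \<in> carrier G" "h \<in> carrier G"
  shows "cj G (g \<otimes> h) X = cj G h (cj G g X)"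
  unfolding cj_def image_image using assms
  by (intro image_cong refl) (auto simp: inv_mult_group m_assoc subsetD)

lemma (in group) cj_inter:
  assumes "X \<subseteq> carrier G" "Y \<subseteq> carrier G" "g \<in> carrier G"
  shows "cj G g (X \<inter> Y) = cj G g X \<inter> cj G g Y"
proof -
  have "X \<inter> Y \<subseteq> carrier G" using assms by blast
  then show ?thesis using assms cj_mem[of "X \<inter> Y" g] cj_mem[of X g] cj_mem[of Y g] by blast
qed

lemma (in group) cj_mono: "X \<subseteq> Y \<Longrightarrow> cj G g X \<subseteq> cj G g Y"
  unfolding cj_def by auto

lemma (in group) cj_subgroup:
  assumes "subgroup X G" "g \<in> carrier G"
  shows "subgroup (cj G g X) G"
proof -
  have X: "X \<subseteq> carrier G" using assms subgroup.subset by blast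
  show ?thesis
  proof (rule subgroupI)
    show "cj G g X \<subseteq> carrier G" using cj_carrier X assms by blast
    show "cj G g X \<noteq> {}" using subgroup.one_closed[OF assms(1)] unfolding cj_def by blast
    fix a b assume ab: "a \<in> cj G g X" "b \<in> cj G g X"
    then have c: "a \<in> carrier G" "b \<in> carrier G" "g \<otimes> a \<otimes> inv g \<in> X" "g \<otimes> b \<otimes> inv g \<in> X"
      using cj_mem[OF X assms(2)] by auto
    have "g \<otimes> inv a \<otimes> inv g = inv (g \<otimes> a \<otimes> inv g)" using c assms by (simp add: inv_mult_group m_assoc)
    then have "g \<otimes> inv a \<otimes> inv g \<in> X" using c subgroup.m_inv_closed[OF assms(1)] by simp
    then show "inv a \<in> cj G g X" using cj_mem[OF X assms(2)] c by simp
    have "g \<otimes> (a \<otimes> b) \<otimes> inv g = (g \<otimes> a \<otimes> inv g) \<otimes> (g \<otimes> b \<otimes> inv g)"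
      using c assms by (simp add: m_assoc)
    then have "g \<otimes> (a \<otimes> b) \<otimes> inv g \<in> X" using c subgroup.m_closed[OF assms(1)] by simp
    then show "a \<otimes> b \<in> cj G g X" using cj_mem[OF X assms(2)] c by simp
  qed
qed

lemma (in group) cj_coset:
  assumes "K \<subseteq> carrier G" "x \<in> carrier G" "g \<in> carrier G"
  shows "cj G g (K #> x) = (cj G g K) #> (inv g \<otimes> x \<otimes> g)"
proof -
  have "\<And>k. k \<in> K \<Longrightarrow> inv g \<otimes> (k \<otimes> x) \<otimes> g = inv g \<otimes> k \<otimes> g \<otimes> (inv g \<otimes> x \<otimes> g)"
    using assms by (simp add: m_assoc subsetD)
  then show ?thesis unfolding cj_def r_coset_def by (auto simp: image_iff)
qed

lemma (in group) fin_index_cj: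
  assumes "K \<subseteq> carrier G" "L \<subseteq> carrier G" "g \<in> carrier G" "fin_index G L K"
  shows "fin_index G (cj G g L) (cj G g K)"
proof -
  have "{cj G g K #> y |y. y \<in> cj G g L} \<subseteq> cj G g ` {K #> x |x. x \<in> L}"
  proof
    fix Z assume "Z \<in> {cj G g K #> y |y. y \<in> cj G g L}"
    then obtain x where x: "x \<in> L" "Z = cj G g K #> (inv g \<otimes> x \<otimes> g)" unfolding cj_def by blast
    then have "Z = cj G g (K #> x)" using cj_coset assms by (simp add: subsetD)
    then show "Z \<in> cj G g ` {K #> x |x. x \<in> L}" using x by blast
  qed
  then show ?thesis using assms(4) unfolding fin_index_def using finite_subset by blast
qed

definition comm :: "('a, 'b) monoid_scheme \<Rightarrow> 'a set \<Rightarrow> 'a set \<Rightarrow> bool" where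
  "comm G X Y \<longleftrightarrow> fin_index G X (X \<inter> Y) \<and> fin_index G Y (X \<inter> Y)"

lemma (in group) comm_half:
  assumes "subgroup X G" "subgroup Y G" "subgroup Z G"
    "fin_index G X (X \<inter> Y)" "fin_index G Y (Y \<inter> Z)"
  shows "fin_index G X (X \<inter> Z)"
proof -
  have s: "subgroup (X \<inter> Y) G" "subgroup (Y \<inter> Z) G" "subgroup (X \<inter> Z) G"
    "subgroup ((X \<inter> Y) \<inter> (Y \<inter> Z)) G"
    using assms subgroups_Inter_pair by blast+
  have "fin_index G (X \<inter> Y) ((X \<inter> Y) \<inter> (Y \<inter> Z))"
    using fin_index_restrict[OF s(2) s(1) _ _ assms(5)] subgroup.subset[OF assms(2)] by blast
  then have "fin_index G X ((X \<inter> Y) \<inter> (Y \<inter> Z))"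
    using fin_index_trans[OF s(4) s(1) _ _ _ assms(4)] subgroup.subset[OF assms(1)] by blast
  then show ?thesis
    using fin_index_mono[OF s(4) s(3)] subgroup.subset[OF assms(1)] by blast
qed

lemma (in group) comm_trans:
  assumes "subgroup X G" "subgroup Y G" "subgroup Z G" "comm G X Y" "comm G Y Z"
  shows "comm G X Z"
  using assms comm_half[of X Y Z] comm_half[of Z Y X] unfolding comm_def
  by (simp add: Int_commute)

lemma (in group) comm_sym: "comm G X Y \<Longrightarrow> comm G Y X"
  unfolding comm_def by (simp add: Int_commute)

lemma (in group) comm_cj:
  assumes "subgroup X G" "subgroup Y G" "g \<in> carrier G" "comm G X Y"
  shows "comm G (cj G g X) (cj G g Y)"
  using assms fin_index_cj[of "X \<inter> Y" X g] fin_index_cj[of "X \<inter> Y" Y g]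
    cj_inter[of X Y g] subgroup.subset
  unfolding comm_def by (metis inf.coboundedI1)

lemma (in group) normalizer_iff:
  assumes "L \<subseteq> carrier G"
  shows "g \<in> normalizer G L \<longleftrightarrow> g \<in> carrier G \<and> (\<forall>x\<in>L. g \<otimes> x \<otimes> inv g \<in> L)
            \<and> (\<forall>x\<in>L. inv g \<otimes> x \<otimes> g \<in> L)"
proof -
  have e: "g \<in> carrier G \<Longrightarrow> g <# L #> inv g = (\<lambda>x. g \<otimes> x \<otimes> inv g) ` L"
    unfolding l_coset_def r_coset_def by auto
  have "g \<in> normalizer G L \<longleftrightarrow> g \<in> carrier G \<and> g <# L #> inv g = L"
    unfolding normalizer_def stabilizer_def using assms by auto
  also have "\<dots> \<longleftrightarrow> g \<in> carrier G \<and> (\<forall>x\<in>L. g \<otimes> x \<otimes> inv g \<in> L)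
            \<and> (\<forall>x\<in>L. inv g \<otimes> x \<otimes> g \<in> L)"
  proof (cases "g \<in> carrier G")
    case True
    have inv1: "\<And>y. y \<in> L \<Longrightarrow> y = g \<otimes> (inv g \<otimes> y \<otimes> g) \<otimes> inv g"
      using True assms by (simp add: m_assoc subsetD)
    have inv2: "\<And>x. x \<in> L \<Longrightarrow> inv g \<otimes> (g \<otimes> x \<otimes> inv g) \<otimes> g = x"
      using True assms by (simp add: m_assoc subsetD)
    show ?thesis
    proof
      assume "g \<in> carrier G \<and> g <# L #> inv g = L"
      then have E: "(\<lambda>x. g \<otimes> x \<otimes> inv g) ` L = L" using e by simp
      have A: "\<forall>x\<in>L. g \<otimes> x \<otimes> inv g \<in> L" using E by blast
      have "\<forall>y\<in>L. inv g \<otimes> y \<otimes> g \<in> L"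
      proof
        fix y assume "y \<in> L"
        then obtain x where "x \<in> L" "y = g \<otimes> x \<otimes> inv g" using E by blast
        then show "inv g \<otimes> y \<otimes> g \<in> L" using inv2 by simp
      qed
      then show "g \<in> carrier G \<and> (\<forall>x\<in>L. g \<otimes> x \<otimes> inv g \<in> L) \<and> (\<forall>x\<in>L. inv g \<otimes> x \<otimes> g \<in> L)"
        using A True by blast
    next
      assume a: "g \<in> carrier G \<and> (\<forall>x\<in>L. g \<otimes> x \<otimes> inv g \<in> L) \<and> (\<forall>x\<in>L. inv g \<otimes> x \<otimes> g \<in> L)"
      have "(\<lambda>x. g \<otimes> x \<otimes> inv g) ` L = L"
      proof
        show "(\<lambda>x. g \<otimes> x \<otimes> inv g) ` L \<subseteq> L" using a by blast
        show "L \<subseteq> (\<lambda>x. g \<otimes> x \<otimes> inv g) ` L"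
        proof
          fix y assume "y \<in> L"
          then show "y \<in> (\<lambda>x. g \<otimes> x \<otimes> inv g) ` L" using a inv1[of y] by blast
        qed
      qed
      then show "g \<in> carrier G \<and> g <# L #> inv g = L" using e True by simp
    qed
  qed simp
  finally show ?thesis .
qed

section \<open>Dietzmann\<close>

abbreviation (in monoid) lprod :: "'a list \<Rightarrow> 'a" where "lprod xs \<equiv> foldr (\<otimes>) xs \<one>"

lemma (in monoid) lprod_carrier: "set xs \<subseteq> carrier G \<Longrightarrow> lprod xs \<in> carrier G"
  by (induction xs) auto

lemma (in monoid) lprod_append: "set xs \<subseteq> carrier G \<Longrightarrow> set ys \<subseteq> carrier G \<Longrightarrow>
   lprod (xs @ ys) = lprod xs \<otimes> lprod ys"
  by (induction xs) (auto simp: m_assoc lprod_carrier)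

lemma (in monoid) lprod_replicate: "x \<in> carrier G \<Longrightarrow> lprod (replicate n x) = x [^] n"
proof (induction n)
  case (Suc n)
  then show ?case using nat_pow_Suc2[of x n] by simp
qed simp

lemma (in group) move_front:
  assumes X: "X \<subseteq> carrier G" and cl: "\<forall>y\<in>X. \<forall>g\<in>carrier G. inv g \<otimes> y \<otimes> g \<in> X"
    and x: "x \<in> X"
  shows "set xs \<subseteq> X \<Longrightarrow> \<exists>ys. set ys \<subseteq> X \<and> length ys = length xs - count_list xs x \<and>
     lprod xs = x [^] (count_list xs x) \<otimes> lprod ys"
proof (induction xs)
  case Nil
  then show ?case by simp
next
  case (Cons y rest)
  then obtain ys where ys: "set ys \<subseteq> X" "length ys = length rest - count_list rest x"
    "lprod rest = x [^] (count_list rest x) \<otimes> lprod ys" by auto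
  have xc: "x \<in> carrier G" using x X by blast
  have yc: "y \<in> carrier G" using Cons X by auto
  have pc: "lprod ys \<in> carrier G" using ys X lprod_carrier by blast
  have le: "count_list rest x \<le> length rest" by (induction rest) auto
  show ?case
  proof (cases "y = x")
    case True
    have "lprod (y # rest) = x \<otimes> (x [^] (count_list rest x) \<otimes> lprod ys)" using ys True by simp
    also have "\<dots> = x [^] (Suc (count_list rest x)) \<otimes> lprod ys"
      using xc pc nat_pow_Suc2[of x "count_list rest x"] by (simp add: m_assoc)
    finally show ?thesis using ys True by (intro exI[of _ ys]) simp
  next
    case False
    let ?k = "count_list rest x"
    let ?z = "inv (x [^] ?k) \<otimes> y \<otimes> x [^] ?k"
    have z: "?z \<in> X" using cl Cons(2) xc by simp
    have "lprod (y # rest) = y \<otimes> (x [^] ?k \<otimes> lprod ys)" using ys by simp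
    also have "\<dots> = x [^] ?k \<otimes> (?z \<otimes> lprod ys)"
    proof -
      define w where "w = x [^] ?k"
      have wc: "w \<in> carrier G" unfolding w_def using xc by simp
      have "w \<otimes> (inv w \<otimes> y \<otimes> w \<otimes> lprod ys) = y \<otimes> (w \<otimes> lprod ys)"
        using wc yc pc by (simp add: m_assoc)
      then show ?thesis unfolding w_def by simp
    qed
    finally have "lprod (y # rest) = x [^] count_list (y # rest) x \<otimes> lprod (?z # ys)" using False by simp
    moreover have "length (?z # ys) = length (y # rest) - count_list (y # rest) x" using False ys le by simp
    ultimately show ?thesis using ys z by (intro exI[of _ "?z # ys"]) simp
  qed
qed

lemma (in group) dietzmann:
  assumes X: "finite X" "X \<subseteq> carrier G" and cl: "\<forall>y\<in>X. \<forall>g\<in>carrier G. inv g \<otimes> y \<otimes> g \<in> X"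
    and tor: "\<forall>x\<in>X. \<exists>n::nat. n > 0 \<and> x [^] n = \<one>"
  shows "finite {lprod xs | xs. set xs \<subseteq> X}"
proof -
  define ord' where "ord' x = (SOME n::nat. n > 0 \<and> x [^] n = \<one>)" for x
  have ord': "ord' x > 0 \<and> x [^] ord' x = \<one>" if "x \<in> X" for x
  proof -
    have "\<exists>n::nat. n > 0 \<and> x [^] n = \<one>" using tor that by blast
    then show ?thesis unfolding ord'_def by (rule someI_ex)
  qed
  define m where "m = Max (ord' ` X)"
  have om: "ord' x \<le> m" if "x \<in> X" for x
    unfolding m_def using X(1) that by (intro Max_ge) auto
  define B where "B = card X * m"
  have main: "\<exists>ys. set ys \<subseteq> X \<and> length ys \<le> B \<and> lprod ys = lprod xs" if "set xs \<subseteq> X" for xs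
    using that
  proof (induction "length xs" arbitrary: xs rule: less_induct)
    case less
    show ?case
    proof (cases "length xs \<le> B")
      case True
      show ?thesis by (rule exI[of _ xs]) (use True less(2) in simp)
    next
      case False
      have "\<exists>x\<in>X. count_list xs x > m"
      proof (rule ccontr)
        assume a: "\<not> (\<exists>x\<in>X. count_list xs x > m)"
        have "sum (count_list xs) X \<le> sum (\<lambda>_. m) X"
          by (rule sum_mono) (use a in auto)
        then have "length xs \<le> B" using sum_count_set[OF less(2) X(1)] unfolding B_def by simp
        then show False using False by simp
      qed
      then obtain x where x: "x \<in> X" "count_list xs x > m" by blast
      obtain ys where ys: "set ys \<subseteq> X" "length ys = length xs - count_list xs x"
        "lprod xs = x [^] (count_list xs x) \<otimes> lprod ys"
        using move_front[OF X(2) cl x(1) less(2)] by blast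
      have xc: "x \<in> carrier G" using x X by blast
      define k where "k = count_list xs x"
      have ok: "ord' x \<le> k" "ord' x > 0" using om[OF x(1)] x(2) ord'[OF x(1)] unfolding k_def by auto
      have "x [^] k = x [^] (k - ord' x) \<otimes> x [^] ord' x"
        using ok xc nat_pow_mult[of x "k - ord' x" "ord' x"] by simp
      also have "\<dots> = x [^] (k - ord' x)" using ord'[OF x(1)] xc by simp
      finally have e: "x [^] k = x [^] (k - ord' x)" .
      define zs where "zs = replicate (k - ord' x) x @ ys"
      have zs: "set zs \<subseteq> X" using ys x unfolding zs_def by auto
      have le: "k \<le> length xs" unfolding k_def by (induction xs) auto
      have len: "length zs < length xs" using ys ok le unfolding zs_def k_def by simp
      have ysc: "set ys \<subseteq> carrier G" using ys(1) X(2) by blast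
      have "lprod zs = lprod (replicate (k - ord' x) x) \<otimes> lprod ys"
      proof -
        have r: "set (replicate (k - ord' x) x) \<subseteq> carrier G" using xc by auto
        show ?thesis unfolding zs_def by (rule lprod_append[OF r ysc])
      qed
      then have "lprod zs = x [^] (k - ord' x) \<otimes> lprod ys"
        using lprod_replicate[OF xc, of "k - ord' x"] by metis
      moreover have "lprod xs = x [^] k \<otimes> lprod ys" using ys(3) unfolding k_def .
      ultimately have pz: "lprod zs = lprod xs" using e by simp
      obtain ws where "set ws \<subseteq> X \<and> length ws \<le> B \<and> lprod ws = lprod zs"
        using less(1)[OF len zs] by blast
      then show ?thesis using pz by auto
    qed
  qed
  have "{lprod xs | xs. set xs \<subseteq> X} \<subseteq> lprod ` {xs. set xs \<subseteq> X \<and> length xs \<le> B}"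
  proof
    fix z assume "z \<in> {lprod xs | xs. set xs \<subseteq> X}"
    then obtain xs where xs: "set xs \<subseteq> X" "z = lprod xs" by blast
    obtain ys where ys: "set ys \<subseteq> X" "length ys \<le> B" "lprod ys = lprod xs" using main[OF xs(1)] by blast
    show "z \<in> lprod ` {xs. set xs \<subseteq> X \<and> length xs \<le> B}"
      using ys xs(2) by (intro image_eqI[of _ _ ys]) auto
  qed
  then show ?thesis using finite_lists_length_le[OF X(1)] finite_subset by blast
qed


lemma (in group) tg_cont_lr:
  assumes tg: "topological_group G T" and a: "a \<in> carrier G" and b: "b \<in> carrier G"
  shows "continuous_map T T (\<lambda>x. a \<otimes> x \<otimes> b)"
proof -
  have top: "topspace T = carrier G" and m: "continuous_map (prod_topology T T) T (\<lambda>p. fst p \<otimes> snd p)"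
    using tg unfolding topological_group_def by auto
  have c1: "continuous_map T (prod_topology T T) (\<lambda>x. (a, x))"
    unfolding continuous_map_paired using a top by simp
  have c2: "continuous_map T T (\<lambda>x. a \<otimes> x)"
    using continuous_map_compose[OF c1 m] by (simp add: o_def)
  have c3: "continuous_map T (prod_topology T T) (\<lambda>x. (a \<otimes> x, b))"
    unfolding continuous_map_paired using b top c2 by simp
  show ?thesis using continuous_map_compose[OF c3 m] by (simp add: o_def)
qed

lemma (in group) tg_coset_open:
  assumes tg: "topological_group G T" and U: "openin T U" and a: "a \<in> carrier G"
  shows "openin T (U #> a)"
proof -
  have top: "topspace T = carrier G" using tg unfolding topological_group_def by auto
  have Uc: "U \<subseteq> carrier G" using openin_subset[OF U] top by simp
  have "U #> a = {x \<in> topspace T. \<one> \<otimes> x \<otimes> inv a \<in> U}"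
  proof
    show "U #> a \<subseteq> {x \<in> topspace T. \<one> \<otimes> x \<otimes> inv a \<in> U}"
    proof
      fix y assume "y \<in> U #> a"
      then obtain h where h: "h \<in> U" "y = h \<otimes> a" unfolding r_coset_def by blast
      have hc: "h \<in> carrier G" using h Uc by blast
      then show "y \<in> {x \<in> topspace T. \<one> \<otimes> x \<otimes> inv a \<in> U}" using h a top by (simp add: m_assoc)
    qed
    show "{x \<in> topspace T. \<one> \<otimes> x \<otimes> inv a \<in> U} \<subseteq> U #> a"
    proof
      fix x assume x: "x \<in> {x \<in> topspace T. \<one> \<otimes> x \<otimes> inv a \<in> U}"
      then have xc: "x \<in> carrier G" "x \<otimes> inv a \<in> U" using top by auto
      have "x = (x \<otimes> inv a) \<otimes> a" using xc a by (simp add: m_assoc)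
      then show "x \<in> U #> a" unfolding r_coset_def using xc by blast
    qed
  qed
  then show ?thesis using openin_continuous_map_preimage[OF tg_cont_lr[OF tg one_closed inv_closed[OF a]] U]
    by simp
qed

lemma (in group) tg_coset_closed:
  assumes tg: "topological_group G T" and U: "closedin T U" and a: "a \<in> carrier G"
  shows "closedin T (U #> a)"
proof -
  have top: "topspace T = carrier G" using tg unfolding topological_group_def by auto
  have Uc: "U \<subseteq> carrier G" using closedin_subset[OF U] top by simp
  have "U #> a = {x \<in> topspace T. \<one> \<otimes> x \<otimes> inv a \<in> U}"
  proof
    show "U #> a \<subseteq> {x \<in> topspace T. \<one> \<otimes> x \<otimes> inv a \<in> U}"
    proof
      fix y assume "y \<in> U #> a"
      then obtain h where h: "h \<in> U" "y = h \<otimes> a" unfolding r_coset_def by blast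
      have hc: "h \<in> carrier G" using h Uc by blast
      then show "y \<in> {x \<in> topspace T. \<one> \<otimes> x \<otimes> inv a \<in> U}" using h a top by (simp add: m_assoc)
    qed
    show "{x \<in> topspace T. \<one> \<otimes> x \<otimes> inv a \<in> U} \<subseteq> U #> a"
    proof
      fix x assume x: "x \<in> {x \<in> topspace T. \<one> \<otimes> x \<otimes> inv a \<in> U}"
      then have xc: "x \<in> carrier G" "x \<otimes> inv a \<in> U" using top by auto
      have "x = (x \<otimes> inv a) \<otimes> a" using xc a by (simp add: m_assoc)
      then show "x \<in> U #> a" unfolding r_coset_def using xc by blast
    qed
  qed
  then show ?thesis using closedin_continuous_map_preimage[OF tg_cont_lr[OF tg one_closed inv_closed[OF a]] U]
    by simp
qed

lemma (in group) tg_cj_closed: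
  assumes tg: "topological_group G T" and U: "closedin T U" and g: "g \<in> carrier G"
  shows "closedin T (cj G g U)"
proof -
  have top: "topspace T = carrier G" using tg unfolding topological_group_def by auto
  have Uc: "U \<subseteq> carrier G" using closedin_subset[OF U] top by simp
  have "cj G g U = {x \<in> topspace T. g \<otimes> x \<otimes> inv g \<in> U}" using cj_mem[OF Uc g] top by auto
  then show ?thesis using closedin_continuous_map_preimage[OF tg_cont_lr[OF tg g inv_closed[OF g]] U]
    by simp
qed

lemma (in group) tg_cj_open:
  assumes tg: "topological_group G T" and U: "openin T U" and g: "g \<in> carrier G"
  shows "openin T (cj G g U)"
proof -
  have top: "topspace T = carrier G" using tg unfolding topological_group_def by auto
  have Uc: "U \<subseteq> carrier G" using openin_subset[OF U] top by simp
  have "cj G g U = {x \<in> topspace T. g \<otimes> x \<otimes> inv g \<in> U}" using cj_mem[OF Uc g] top by auto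
  then show ?thesis using openin_continuous_map_preimage[OF tg_cont_lr[OF tg g inv_closed[OF g]] U]
    by simp
qed

lemma (in group) tg_open_subgroup_mono:
  assumes tg: "topological_group G T" and K: "subgroup K G" and U: "subgroup U G" "openin T U"
    and UK: "U \<subseteq> K"
  shows "openin T K"
proof -
  have "K = \<Union>{U #> k | k. k \<in> K}"
  proof
    show "K \<subseteq> \<Union>{U #> k | k. k \<in> K}"
    proof
      fix k assume "k \<in> K"
      then have "k \<in> U #> k" using rcos_self[OF _ U(1)] subgroup.subset[OF K] by blast
      then show "k \<in> \<Union>{U #> k | k. k \<in> K}" using \<open>k \<in> K\<close> by blast
    qed
    show "\<Union>{U #> k | k. k \<in> K} \<subseteq> K"
      using UK subgroup.m_closed[OF K] unfolding r_coset_def by blast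
  qed
  moreover have "openin T (\<Union>{U #> k | k. k \<in> K})"
    using tg_coset_open[OF tg U(2)] subgroup.subset[OF K] by (intro openin_Union) blast
  ultimately show ?thesis by simp
qed

lemma (in group) tg_open_fin_index:
  assumes tg: "topological_group G T" and cpt: "compact_space T" and U: "subgroup U G" "openin T U"
  shows "fin_index G (carrier G) U"
proof -
  have top: "topspace T = carrier G" using tg unfolding topological_group_def by auto
  let ?C = "{U #> x | x. x \<in> carrier G}"
  have "\<forall>V\<in>?C. openin T V" using tg_coset_open[OF tg U(2)] by blast
  moreover have "topspace T \<subseteq> \<Union>?C" using top rcos_self[OF _ U(1)] by blast
  ultimately obtain F where F: "finite F" "F \<subseteq> ?C" "topspace T \<subseteq> \<Union>F"
    using cpt[unfolded compact_space_alt, rule_format, of ?C] by blast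
  have "?C \<subseteq> F"
  proof
    fix V assume "V \<in> ?C"
    then obtain x where x: "x \<in> carrier G" "V = U #> x" by blast
    then obtain W where W: "W \<in> F" "x \<in> W" using F(3) top by blast
    then obtain y where y: "y \<in> carrier G" "W = U #> y" using F(2) by blast
    have "U #> y = U #> x" using repr_independence[OF _ y(1) U(1)] W y by simp
    then show "V \<in> F" using W x y by simp
  qed
  then show ?thesis unfolding fin_index_def using F(1) finite_subset by blast
qed

lemma (in group) tg_closed_fin_index_open:
  assumes tg: "topological_group G T" and H: "subgroup H G" "closedin T H"
    and fi: "fin_index G (carrier G) H"
  shows "openin T H"
proof -
  have top: "topspace T = carrier G" using tg unfolding topological_group_def by auto
  let ?F = "{H #> x | x. x \<in> carrier G \<and> H #> x \<noteq> H}"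
  have "carrier G - H = \<Union>?F"
  proof
    show "carrier G - H \<subseteq> \<Union>?F"
    proof
      fix x assume x: "x \<in> carrier G - H"
      then have "x \<in> H #> x" using rcos_self[OF _ H(1)] by blast
      moreover have "H #> x \<noteq> H" using x rcos_self[OF _ H(1)] by auto
      ultimately show "x \<in> \<Union>?F" using x by blast
    qed
    show "\<Union>?F \<subseteq> carrier G - H"
    proof
      fix y assume "y \<in> \<Union>?F"
      then obtain x where x: "x \<in> carrier G" "H #> x \<noteq> H" "y \<in> H #> x" by blast
      have yc: "y \<in> carrier G" using x(3) x(1) subgroup.subset[OF H(1)] unfolding r_coset_def by blast
      have "H #> y = H #> x" using repr_independence[OF x(3) x(1) H(1)] by simp
      moreover have "y \<in> H \<Longrightarrow> H #> y = H" using subgroup.rcos_const[OF H(1) is_group] by blast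
      ultimately show "y \<in> carrier G - H" using x yc by auto
    qed
  qed
  moreover have "finite ?F"
  proof -
    have "?F \<subseteq> {H #> x | x. x \<in> carrier G}" by blast
    then show ?thesis using fi unfolding fin_index_def using finite_subset by blast
  qed
  moreover have "\<forall>V\<in>?F. closedin T V" using tg_coset_closed[OF tg H(2)] by blast
  ultimately have "closedin T (\<Union>?F)" by (intro closedin_Union) auto
  then have "closedin T (carrier G - H)" using \<open>carrier G - H = \<Union>?F\<close> by simp
  then show ?thesis unfolding openin_closedin_eq top using subgroup.subset[OF H(1)] by simp
qed


section \<open>Commensurability of conjugates\<close>

lemma (in group) fin_index_self:
  assumes "subgroup H G" shows "fin_index G H H"
proof -
  have "{H #> x |x. x \<in> H} \<subseteq> {H}" using subgroup.rcos_const[OF assms is_group] by blast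
  then show ?thesis unfolding fin_index_def using finite_subset by blast
qed

lemma (in group) comm_refl: "subgroup H G \<Longrightarrow> comm G H H"
  unfolding comm_def using fin_index_self by simp

lemma (in group) cj_self:
  assumes "subgroup L G" "x \<in> L"
  shows "cj G x L = L"
proof -
  have Lc: "L \<subseteq> carrier G" and xc: "x \<in> carrier G" using assms subgroup.subset by blast+
  show ?thesis
  proof
    show "cj G x L \<subseteq> L"
    proof
      fix y assume "y \<in> cj G x L"
      then obtain z where z: "z \<in> L" "y = inv x \<otimes> z \<otimes> x" unfolding cj_def by blast
      have "inv x \<in> L" using subgroup.m_inv_closed[OF assms] .
      then show "y \<in> L" using z assms subgroup.m_closed[OF assms(1)] by simp
    qed
    show "L \<subseteq> cj G x L"
    proof
      fix y assume "y \<in> L"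
      moreover have "inv x \<in> L" using subgroup.m_inv_closed[OF assms] .
      ultimately have "x \<otimes> y \<otimes> inv x \<in> L" using assms subgroup.m_closed[OF assms(1)] by simp
      then show "y \<in> cj G x L" using cj_mem[OF Lc xc] \<open>y \<in> L\<close> Lc by blast
    qed
  qed
qed

lemma (in group) comm_base:
  assumes H: "subgroup H G" and L: "subgroup L G" "H \<subseteq> L" "fin_index G L H" and x: "x \<in> L"
  shows "comm G H (cj G x H)"
proof -
  have Lc: "L \<subseteq> carrier G" and xc: "x \<in> carrier G" using L x subgroup.subset by blast+
  have Hc: "H \<subseteq> carrier G" using H subgroup.subset by blast
  have "fin_index G (cj G x L) (cj G x H)" using fin_index_cj[OF Hc Lc xc L(3)] .
  then have f: "fin_index G L (cj G x H)" using cj_self[OF L(1) x] by simp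
  have cs: "subgroup (cj G x H) G" using cj_subgroup[OF H xc] .
  have cL: "cj G x H \<subseteq> L" using cj_mono[OF L(2), of x] cj_self[OF L(1) x] by simp
  have 1: "fin_index G H (H \<inter> cj G x H)" using fin_index_restrict[OF cs H L(2) Lc f] .
  have 2: "fin_index G (cj G x H) (cj G x H \<inter> H)" using fin_index_restrict[OF H cs cL Lc L(3)] .
  show ?thesis unfolding comm_def using 1 2 by (simp add: Int_commute)
qed

lemma (in group) comm_generate:
  assumes H: "subgroup H G"
    and L1: "subgroup L1 G" "H \<subseteq> L1" "fin_index G L1 H"
    and L2: "subgroup L2 G" "H \<subseteq> L2" "fin_index G L2 H"
    and p: "p \<in> generate G (L1 \<union> L2)"
  shows "comm G H (cj G p H)"
  using p
proof (induction rule: generate.induct)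
  case one
  then show ?case using cj_one[OF subgroup.subset[OF H]] comm_refl[OF H] by simp
next
  case (incl h)
  then show ?case using comm_base[OF H L1] comm_base[OF H L2] by blast
next
  case (inv h)
  then show ?case using comm_base[OF H L1] comm_base[OF H L2]
      subgroup.m_inv_closed[OF L1(1)] subgroup.m_inv_closed[OF L2(1)] by blast
next
  case (eng p q)
  have sub: "L1 \<union> L2 \<subseteq> carrier G" using L1 L2 subgroup.subset by blast
  have pc: "p \<in> carrier G" "q \<in> carrier G"
    using eng(1,2) generate_is_subgroup[OF sub] subgroup.subset by blast+
  have Hc: "H \<subseteq> carrier G" using H subgroup.subset by blast
  have e: "cj G (p \<otimes> q) H = cj G q (cj G p H)" using cj_mult[OF Hc pc] .
  have "comm G (cj G q H) (cj G q (cj G p H))"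
    using comm_cj[OF H cj_subgroup[OF H pc(1)] pc(2) eng(3)] .
  then show ?case using comm_trans[OF H cj_subgroup[OF H pc(2)] cj_subgroup[OF cj_subgroup[OF H pc(1)] pc(2)]]
      eng(4) e by simp
qed

lemma (in group) cj_normalizer:
  assumes "H \<subseteq> carrier G" "n \<in> normalizer G H"
  shows "cj G n H = H"
proof -
  have n: "n \<in> carrier G" "\<forall>x\<in>H. n \<otimes> x \<otimes> inv n \<in> H" "\<forall>x\<in>H. inv n \<otimes> x \<otimes> n \<in> H"
    using normalizer_iff[OF assms(1)] assms(2) by auto
  show ?thesis
  proof
    show "cj G n H \<subseteq> H" unfolding cj_def using n by blast
    show "H \<subseteq> cj G n H" using cj_mem[OF assms(1) n(1)] n assms(1) by blast
  qed
qed

lemma (in group) generate_normalized: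
  assumes S: "S \<subseteq> carrier G" and g: "g \<in> carrier G"
    and cl: "\<forall>h\<in>S. g \<otimes> h \<otimes> inv g \<in> generate G S"
    and x: "x \<in> generate G S"
  shows "g \<otimes> x \<otimes> inv g \<in> generate G S"
  using x
proof (induction rule: generate.induct)
  case one
  then show ?case using g generate.one by simp
next
  case (incl h)
  then show ?case using cl by blast
next
  case (inv h)
  have hc: "h \<in> carrier G" using inv S by blast
  have "g \<otimes> inv h \<otimes> inv g = inv (g \<otimes> h \<otimes> inv g)" using hc g by (simp add: inv_mult_group m_assoc)
  moreover have "g \<otimes> h \<otimes> inv g \<in> generate G S" using cl inv by blast
  ultimately show ?case using subgroup.m_inv_closed[OF generate_is_subgroup[OF S]] by simp
next
  case (eng p q)
  have pc: "p \<in> carrier G" "q \<in> carrier G"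
    using eng(1,2) generate_is_subgroup[OF S] subgroup.subset by blast+
  have "g \<otimes> (p \<otimes> q) \<otimes> inv g = (g \<otimes> p \<otimes> inv g) \<otimes> (g \<otimes> q \<otimes> inv g)"
    using pc g by (simp add: m_assoc)
  then show ?case using generate.eng[OF eng(3,4)] by simp
qed

lemma (in group) fin_index_Inter:
  assumes H: "subgroup H G" and F: "finite F" "\<forall>Y\<in>F. subgroup Y G \<and> fin_index G H (H \<inter> Y)"
  shows "fin_index G H (H \<inter> \<Inter>F)"
  using F
proof (induction F rule: finite_induct)
  case empty
  then show ?case using fin_index_self[OF H] by simp
next
  case (insert Y F)
  have Hc: "H \<subseteq> carrier G" using H subgroup.subset by blast
  have sF: "subgroup (H \<inter> \<Inter>F) G"
  proof -
    have "subgroup (\<Inter>(insert H F)) G" using insert H by (intro subgroups_Inter) auto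
    then show ?thesis by simp
  qed
  have sY: "subgroup (H \<inter> Y) G" using insert H subgroups_Inter_pair by blast
  have a: "fin_index G H (H \<inter> \<Inter>F)" using insert by simp
  have b: "fin_index G H (H \<inter> Y)" using insert by simp
  have "fin_index G (H \<inter> \<Inter>F) ((H \<inter> \<Inter>F) \<inter> (H \<inter> Y))"
    using fin_index_restrict[OF sY sF _ Hc b] by blast
  moreover have "(H \<inter> \<Inter>F) \<inter> (H \<inter> Y) = H \<inter> \<Inter>(insert Y F)" by blast
  moreover have "subgroup ((H \<inter> \<Inter>F) \<inter> (H \<inter> Y)) G" using sF sY by (rule subgroups_Inter_pair)
  ultimately have "fin_index G H ((H \<inter> \<Inter>F) \<inter> (H \<inter> Y))"
    using fin_index_trans[of "(H \<inter> \<Inter>F) \<inter> (H \<inter> Y)" "H \<inter> \<Inter>F" H] sF Hc a by blast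
  then show ?case using \<open>(H \<inter> \<Inter>F) \<inter> (H \<inter> Y) = H \<inter> \<Inter>(insert Y F)\<close> by simp
qed


lemma (in group) subgroup_pow_closed:
  assumes "subgroup L G" "a \<in> L" shows "a [^] (n::nat) \<in> L"
proof (induction n)
  case 0
  then show ?case using subgroup.one_closed[OF assms(1)] by simp
next
  case (Suc n)
  then show ?case using subgroup.m_closed[OF assms(1) _ assms(2)] by simp
qed

lemma (in group) coset_torsion:
  assumes C: "subgroup C G" and L: "subgroup L G" "fin_index G L C" and a: "a \<in> L"
  shows "\<exists>n::nat. n > 0 \<and> a [^] n \<in> C"
proof -
  have ac: "a \<in> carrier G" using a L subgroup.subset by blast
  define f where "f k = C #> a [^] (k::nat)" for k
  have "range f \<subseteq> {C #> x | x. x \<in> L}" unfolding f_def using subgroup_pow_closed[OF L(1) a] by blast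
  then have "finite (range f)" using L(2) unfolding fin_index_def using finite_subset by blast
  then have "\<not> inj f" using finite_imageD infinite_UNIV_nat by blast
  then obtain i j where ij: "i \<noteq> j" "f i = f j" unfolding inj_def by blast
  have key: "a [^] (j - i) \<in> C" if "i < j" "f i = f j" for i j
  proof -
    have "C #> a [^] j = C #> a [^] i" using that unfolding f_def by simp
    then have "a [^] j \<otimes> inv (a [^] i) \<in> C" using coset_eq_iff[OF C] ac by simp
    moreover have "a [^] j = a [^] (j - i) \<otimes> a [^] i" using that ac by (simp add: nat_pow_mult)
    ultimately show ?thesis using ac by (simp add: m_assoc)
  qed
  show ?thesis
  proof (cases "i < j")
    case True
    then show ?thesis using key[OF True ij(2)] by (intro exI[of _ "j - i"]) simp
  next
    case False
    then have "j < i" using ij by simp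
    then show ?thesis using key[OF \<open>j < i\<close> ij(2)[symmetric]] by (intro exI[of _ "i - j"]) simp
  qed
qed

lemma (in group) cj_pow:
  assumes "g \<in> carrier G" "a \<in> carrier G"
  shows "(inv g \<otimes> a \<otimes> g) [^] (n::nat) = inv g \<otimes> a [^] n \<otimes> g"
proof (induction n)
  case 0
  then show ?case using assms by simp
next
  case (Suc n)
  then show ?case using assms by (simp add: m_assoc)
qed


section \<open>The join lemma\<close>

lemma r_coset_upd [simp]: "r_coset (G\<lparr>carrier := P\<rparr>) = r_coset G"
  by (intro ext) (simp add: r_coset_def)

lemma set_mult_upd [simp]: "set_mult (G\<lparr>carrier := P\<rparr>) = set_mult G"
  by (intro ext) (simp add: set_mult_def)

lemma (in group) join_lemma:
  assumes tg: "topological_group G T" and cpt: "compact_space T"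
    and H: "subgroup H G" "closedin T H" "openin T (normalizer G H)"
    and L1: "subgroup L1 G" "openin T (normalizer G L1)" "H \<subseteq> L1" "fin_index G L1 H"
    and L2: "subgroup L2 G" "openin T (normalizer G L2)" "H \<subseteq> L2" "fin_index G L2 H"
  shows "fin_index G (generate G (L1 \<union> L2)) H \<and> closedin T (generate G (L1 \<union> L2))
         \<and> openin T (normalizer G (generate G (L1 \<union> L2)))"
proof -
  define S where "S = L1 \<union> L2"
  define P where "P = generate G S"
  have L1c: "L1 \<subseteq> carrier G" using subgroup.subset[OF L1(1)] .
  have L2c: "L2 \<subseteq> carrier G" using subgroup.subset[OF L2(1)] .
  have Sc: "S \<subseteq> carrier G" using L1c L2c unfolding S_def by blast
  have P: "subgroup P G" unfolding P_def using generate_is_subgroup[OF Sc] .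
  have Pc: "P \<subseteq> carrier G" using subgroup.subset[OF P] .
  have SP: "S \<subseteq> P" unfolding P_def using generate.incl[of _ S G] by blast
  have Hc: "H \<subseteq> carrier G" using subgroup.subset[OF H(1)] .
  define U where "U = normalizer G L1 \<inter> normalizer G L2"
  have U: "subgroup U G" unfolding U_def
    using normalizer_imp_subgroup[OF L1c] normalizer_imp_subgroup[OF L2c] subgroups_Inter_pair by blast
  have Uo: "openin T U" unfolding U_def using L1(2) L2(2) by blast
  have Uc: "U \<subseteq> carrier G" using subgroup.subset[OF U] .
  have Unorm: "inv u \<otimes> a \<otimes> u \<in> L1" "inv u \<otimes> b \<otimes> u \<in> L2"
    if "u \<in> U" "a \<in> L1" "b \<in> L2" for u a b
    using that normalizer_iff[OF L1c] normalizer_iff[OF L2c] unfolding U_def by auto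
  have UN: "U \<subseteq> normalizer G P"
  proof
    fix u assume u: "u \<in> U"
    have uc: "u \<in> carrier G" using u Uc by blast
    have iu: "inv u \<in> U" using subgroup.m_inv_closed[OF U u] .
    have nrm: "\<forall>h\<in>S. v \<otimes> h \<otimes> inv v \<in> generate G S" if v: "v \<in> U" for v
    proof -
      have "v \<in> normalizer G L1" "v \<in> normalizer G L2" using v unfolding U_def by auto
      then have "\<forall>h\<in>L1. v \<otimes> h \<otimes> inv v \<in> L1" "\<forall>h\<in>L2. v \<otimes> h \<otimes> inv v \<in> L2"
        using normalizer_iff[OF L1c] normalizer_iff[OF L2c] by auto
      then show ?thesis using SP unfolding S_def P_def by blast
    qed
    have a: "\<forall>x\<in>P. u \<otimes> x \<otimes> inv u \<in> P"
      using generate_normalized[OF Sc uc nrm[OF u]] unfolding P_def by blast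
    have b0: "\<forall>x\<in>P. inv u \<otimes> x \<otimes> inv (inv u) \<in> P"
      using generate_normalized[OF Sc inv_closed[OF uc] nrm[OF iu]] unfolding P_def by blast
    have b: "\<forall>x\<in>P. inv u \<otimes> x \<otimes> u \<in> P" using b0 uc by simp
    show "u \<in> normalizer G P" using normalizer_iff[OF Pc] uc a b by blast
  qed
  have NPo: "openin T (normalizer G P)"
    using tg_open_subgroup_mono[OF tg normalizer_imp_subgroup[OF Pc] U Uo UN] .
  have comm: "\<forall>p\<in>P. comm G H (cj G p H)"
    using comm_generate[OF H(1) L1(1,3,4) L2(1,3,4)] unfolding P_def S_def by blast
  define NH where "NH = normalizer G H"
  have NH: "subgroup NH G" unfolding NH_def using normalizer_imp_subgroup[OF Hc] .
  have fNH: "fin_index G (carrier G) NH" using tg_open_fin_index[OF tg cpt NH] H(3) NH_def by simp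
  have finCF: "finite {(\<lambda>p. cj G p H) p | p. p \<in> P}"
  proof (rule finite_factor[of G NH P "\<lambda>p. cj G p H"])
    have "{NH #> x | x. x \<in> P} \<subseteq> {NH #> x | x. x \<in> carrier G}" using Pc by blast
    then show "finite {NH #> x | x. x \<in> P}" using fNH unfolding fin_index_def using finite_subset by blast
    fix x y assume xy: "x \<in> P" "y \<in> P" "NH #> x = NH #> y"
    have c: "x \<in> carrier G" "y \<in> carrier G" using xy Pc by auto
    have n: "x \<otimes> inv y \<in> NH" using coset_eq_iff[OF NH c] xy by simp
    have nc: "x \<otimes> inv y \<in> carrier G" using c by simp
    have "x = (x \<otimes> inv y) \<otimes> y" using c by (simp add: m_assoc)
    then have "cj G x H = cj G y (cj G (x \<otimes> inv y) H)" using cj_mult[OF Hc nc c(2)] by simp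
    also have "\<dots> = cj G y H" using cj_normalizer[OF Hc] n NH_def by simp
    finally show "cj G x H = cj G y H" .
  qed
  define CF where "CF = {cj G p H | p. p \<in> P}"
  have fCF: "finite CF" using finCF unfolding CF_def by simp
  define C where "C = H \<inter> \<Inter>CF"
  have fHC: "fin_index G H C"
    unfolding C_def
  proof (rule fin_index_Inter[OF H(1) fCF])
    show "\<forall>Y\<in>CF. subgroup Y G \<and> fin_index G H (H \<inter> Y)"
      using comm cj_subgroup[OF H(1)] Pc unfolding comm_def CF_def by blast
  qed
  have C: "subgroup C G"
  proof -
    have "subgroup (\<Inter>(insert H CF)) G"
      using H(1) cj_subgroup[OF H(1)] Pc unfolding CF_def by (intro subgroups_Inter) auto
    then show ?thesis unfolding C_def by simp
  qed
  have Ccl: "closedin T C"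
  proof -
    have "closedin T (\<Inter>(insert H CF))"
      using H(2) tg_cj_closed[OF tg H(2)] Pc unfolding CF_def by (intro closedin_Inter) auto
    then show ?thesis unfolding C_def by simp
  qed
  have CH: "C \<subseteq> H" unfolding C_def by blast
  have Cnorm: "inv q \<otimes> c \<otimes> q \<in> C" if q: "q \<in> P" and c: "c \<in> C" for q c
  proof -
    have qc: "q \<in> carrier G" using q Pc by blast
    have cc: "c \<in> carrier G" using c CH Hc by blast
    have iq: "inv q \<in> P" using subgroup.m_inv_closed[OF P q] .
    have c1: "c \<in> cj G (inv q) H" using c iq unfolding C_def CF_def by blast
    then have "inv q \<otimes> c \<otimes> inv (inv q) \<in> H" using cj_mem[OF Hc inv_closed[OF qc]] by simp
    then have h: "inv q \<otimes> c \<otimes> q \<in> H" using qc by simp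
    have "inv q \<otimes> c \<otimes> q \<in> cj G p H" if p: "p \<in> P" for p
    proof -
      have pc: "p \<in> carrier G" using p Pc by blast
      have "p \<otimes> inv q \<in> P" using subgroup.m_closed[OF P p iq] .
      then have "c \<in> cj G (p \<otimes> inv q) H" using c unfolding C_def CF_def by blast
      then have "(p \<otimes> inv q) \<otimes> c \<otimes> inv (p \<otimes> inv q) \<in> H"
        using cj_mem[OF Hc m_closed[OF pc inv_closed[OF qc]]] by simp
      moreover have "(p \<otimes> inv q) \<otimes> c \<otimes> inv (p \<otimes> inv q) = p \<otimes> (inv q \<otimes> c \<otimes> q) \<otimes> inv p"
        using pc qc cc by (simp add: inv_mult_group m_assoc)
      ultimately show ?thesis using cj_mem[OF Hc pc] pc qc cc by simp
    qed
    then show ?thesis using h unfolding C_def CF_def by blast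
  qed
  have cjC: "cj G t C = C" if t: "t \<in> P" for t
  proof
    have tc: "t \<in> carrier G" using t Pc by blast
    have Cc: "C \<subseteq> carrier G" using CH Hc by blast
    show "cj G t C \<subseteq> C" unfolding cj_def using Cnorm[OF t] by blast
    show "C \<subseteq> cj G t C"
    proof
      fix c assume c: "c \<in> C"
      have "inv (inv t) \<otimes> c \<otimes> inv t \<in> C" using Cnorm[OF subgroup.m_inv_closed[OF P t] c] .
      then have "t \<otimes> c \<otimes> inv t \<in> C" using tc by simp
      then show "c \<in> cj G t C" using cj_mem[OF Cc tc] c Cc by blast
    qed
  qed
  have L1c': "L1 \<subseteq> P" and L2c': "L2 \<subseteq> P" using SP unfolding S_def by auto
  have fL1C: "fin_index G L1 C" using fin_index_trans[OF C H(1) CH L1(3) L1c L1(4) fHC] .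
  have fL2C: "fin_index G L2 C" using fin_index_trans[OF C H(1) CH L2(3) L2c L2(4) fHC] .
  define GP where "GP = G\<lparr>carrier := P\<rparr>"
  have gGP: "group GP" unfolding GP_def using subgroup_imp_group[OF P] .
  have CP: "C \<subseteq> P" using CH L1(3) L1c' by blast
  have Cc: "C \<subseteq> carrier G" using CH Hc by blast
  have nC: "normal C GP"
  proof -
    have sC: "subgroup C GP" unfolding GP_def using subgroup_incl[OF C P CP] .
    have "\<forall>x\<in>carrier GP. \<forall>h\<in>C. x \<otimes>\<^bsub>GP\<^esub> h \<otimes>\<^bsub>GP\<^esub> inv\<^bsub>GP\<^esub> x \<in> C"
    proof (intro ballI)
      fix x h assume x: "x \<in> carrier GP" and h: "h \<in> C"
      have xP: "x \<in> P" using x unfolding GP_def by simp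
      have i: "inv\<^bsub>GP\<^esub> x = inv x" unfolding GP_def using m_inv_consistent[OF P xP] .
      have ixP: "inv x \<in> P" using subgroup.m_inv_closed[OF P xP] .
      have "inv (inv x) \<otimes> h \<otimes> inv x \<in> C" using Cnorm[OF ixP h] .
      then have "x \<otimes> h \<otimes> inv x \<in> C" using xP Pc by (simp add: subsetD)
      then show "x \<otimes>\<^bsub>GP\<^esub> h \<otimes>\<^bsub>GP\<^esub> inv\<^bsub>GP\<^esub> x \<in> C" using i unfolding GP_def by simp
    qed
    then show ?thesis using group.normal_inv_iff[OF gGP] sC by blast
  qed
  define Q where "Q = GP Mod C"
  have gQ: "group Q" unfolding Q_def using normal.factorgroup_is_group[OF nC] .
  have carQ: "carrier Q = {C #> x | x. x \<in> P}"
    unfolding Q_def carrier_FactGroup GP_def by auto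
  have oneQ: "\<one>\<^bsub>Q\<^esub> = C" unfolding Q_def by simp
  have multQ: "(C #> x) \<otimes>\<^bsub>Q\<^esub> (C #> y) = C #> (x \<otimes> y)" if "x \<in> P" "y \<in> P" for x y
  proof -
    have "(C #>\<^bsub>GP\<^esub> x) <#>\<^bsub>GP\<^esub> (C #>\<^bsub>GP\<^esub> y) = C #>\<^bsub>GP\<^esub> (x \<otimes>\<^bsub>GP\<^esub> y)"
      using normal.rcos_sum[OF nC] that unfolding GP_def by simp
    then show ?thesis unfolding Q_def GP_def by simp
  qed
  have inQ: "C #> x \<in> carrier Q" if "x \<in> P" for x using that carQ by blast
  have C1: "C #> \<one> = C" using coset_mult_one[OF Cc] .
  have invQ: "inv\<^bsub>Q\<^esub> (C #> x) = C #> inv x" if x: "x \<in> P" for x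
  proof -
    have ix: "inv x \<in> P" using subgroup.m_inv_closed[OF P x] .
    have "(C #> inv x) \<otimes>\<^bsub>Q\<^esub> (C #> x) = \<one>\<^bsub>Q\<^esub>"
      using multQ[OF ix x] x Pc oneQ C1 by (simp add: subsetD)
    then show ?thesis using group.inv_equality[OF gQ _ inQ[OF x] inQ[OF ix]] by blast
  qed
  have powQ: "(C #> x) [^]\<^bsub>Q\<^esub> (n::nat) = C #> (x [^] n)" if x: "x \<in> P" for x n
  proof (induction n)
    case 0
    then show ?case using oneQ C1 by simp
  next
    case (Suc n)
    have "x [^] n \<in> P" using subgroup_pow_closed[OF P x] .
    then show ?case using Suc multQ[OF _ x] by simp
  qed
  define X where "X = {C #> (inv g \<otimes> a \<otimes> g) | g a. g \<in> P \<and> a \<in> S}"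
  have conjP: "inv g \<otimes> a \<otimes> g \<in> P" if "g \<in> P" "a \<in> P" for g a
    using that subgroup.m_closed[OF P] subgroup.m_inv_closed[OF P] by blast
  have XQ: "X \<subseteq> carrier Q"
  proof
    fix y assume "y \<in> X"
    then obtain g a where ga: "g \<in> P" "a \<in> S" "y = C #> (inv g \<otimes> a \<otimes> g)" unfolding X_def by blast
    then show "y \<in> carrier Q" using inQ conjP SP by blast
  qed
  have Xcl: "\<forall>y\<in>X. \<forall>h\<in>carrier Q. inv\<^bsub>Q\<^esub> h \<otimes>\<^bsub>Q\<^esub> y \<otimes>\<^bsub>Q\<^esub> h \<in> X"
  proof (intro ballI)
    fix y h assume y: "y \<in> X" and h: "h \<in> carrier Q"
    obtain g a where ga: "g \<in> P" "a \<in> S" "y = C #> (inv g \<otimes> a \<otimes> g)" using y unfolding X_def by blast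
    obtain p where p: "p \<in> P" "h = C #> p" using h carQ by blast
    have aP: "a \<in> P" using ga SP by blast
    have gc: "g \<in> carrier G" and pc: "p \<in> carrier G" and ac: "a \<in> carrier G" using ga p aP Pc by auto
    have ip: "inv p \<in> P" using subgroup.m_inv_closed[OF P p(1)] .
    have gp: "g \<otimes> p \<in> P" using subgroup.m_closed[OF P ga(1) p(1)] .
    have "inv\<^bsub>Q\<^esub> h \<otimes>\<^bsub>Q\<^esub> y \<otimes>\<^bsub>Q\<^esub> h = C #> (inv p \<otimes> (inv g \<otimes> a \<otimes> g) \<otimes> p)"
      using invQ[OF p(1)] multQ[OF ip conjP[OF ga(1) aP]] multQ[OF subgroup.m_closed[OF P ip conjP[OF ga(1) aP]] p(1)]
        p(2) ga(3) by simp
    also have "inv p \<otimes> (inv g \<otimes> a \<otimes> g) \<otimes> p = inv (g \<otimes> p) \<otimes> a \<otimes> (g \<otimes> p)"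
      using gc pc ac by (simp add: inv_mult_group m_assoc)
    finally show "inv\<^bsub>Q\<^esub> h \<otimes>\<^bsub>Q\<^esub> y \<otimes>\<^bsub>Q\<^esub> h \<in> X" unfolding X_def using gp ga(2) by blast
  qed
  have Xtor: "\<forall>y\<in>X. \<exists>n::nat. n > 0 \<and> y [^]\<^bsub>Q\<^esub> n = \<one>\<^bsub>Q\<^esub>"
  proof
    fix y assume y: "y \<in> X"
    obtain g a where ga: "g \<in> P" "a \<in> S" "y = C #> (inv g \<otimes> a \<otimes> g)" using y unfolding X_def by blast
    have aP: "a \<in> P" using ga SP by blast
    have gc: "g \<in> carrier G" and ac: "a \<in> carrier G" using ga aP Pc by auto
    obtain n::nat where n: "n > 0" "a [^] n \<in> C"
      using ga(2) coset_torsion[OF C L1(1) fL1C] coset_torsion[OF C L2(1) fL2C] unfolding S_def by blast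
    have "y [^]\<^bsub>Q\<^esub> n = C #> (inv g \<otimes> a [^] n \<otimes> g)"
      using powQ[OF conjP[OF ga(1) aP]] ga(3) cj_pow[OF gc ac] by simp
    also have "\<dots> = C" using subgroup.rcos_const[OF C is_group Cnorm[OF ga(1) n(2)]] .
    finally show "\<exists>n::nat. n > 0 \<and> y [^]\<^bsub>Q\<^esub> n = \<one>\<^bsub>Q\<^esub>" using n(1) oneQ by blast
  qed
  define V where "V = P \<inter> U"
  have V: "subgroup V G" unfolding V_def using subgroups_Inter_pair[OF P U] .
  have fU: "fin_index G (carrier G) U" using tg_open_fin_index[OF tg cpt U Uo] .
  have fV: "fin_index G P V" unfolding V_def using fin_index_restrict[OF U P Pc subset_refl fU] .
  define r where "r Y = (SOME t. t \<in> P \<and> V #> t = Y)" for Y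
  define R where "R = r ` {V #> x | x. x \<in> P}"
  have fR: "finite R" unfolding R_def using fV unfolding fin_index_def by simp
  define A where "A = {C #> a | a. a \<in> L1} \<union> {C #> a | a. a \<in> L2}"
  have fA: "finite A" unfolding A_def using fL1C fL2C unfolding fin_index_def by simp
  have XRA: "X \<subseteq> (\<lambda>(t, Y). cj G t Y) ` (R \<times> A)"
  proof
    fix y assume y: "y \<in> X"
    obtain g a where ga: "g \<in> P" "a \<in> S" "y = C #> (inv g \<otimes> a \<otimes> g)" using y unfolding X_def by blast
    have aP: "a \<in> P" using ga SP by blast
    have gc: "g \<in> carrier G" and ac: "a \<in> carrier G" using ga aP Pc by auto
    have "\<exists>t. t \<in> P \<and> V #> t = V #> g" using ga(1) by blast
    then have t: "r (V #> g) \<in> P \<and> V #> r (V #> g) = V #> g" unfolding r_def by (rule someI_ex)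
    define t where "t = r (V #> g)"
    have tP: "t \<in> P" and tV: "V #> t = V #> g" using t t_def by auto
    have tR: "t \<in> R" unfolding R_def t_def using ga(1) by blast
    have tc: "t \<in> carrier G" using tP Pc by blast
    define u where "u = g \<otimes> inv t"
    have uV: "u \<in> V" unfolding u_def using coset_eq_iff[OF V gc tc] tV by simp
    have uU: "u \<in> U" using uV unfolding V_def by blast
    have uc: "u \<in> carrier G" unfolding u_def using gc tc by simp
    have gut: "g = u \<otimes> t" unfolding u_def using gc tc by (simp add: m_assoc)
    define a' where "a' = inv u \<otimes> a \<otimes> u"
    have a'S: "a' \<in> L1 \<or> a' \<in> L2"
      using ga(2) Unorm(1)[OF uU _ subgroup.one_closed[OF L2(1)]] Unorm(2)[OF uU subgroup.one_closed[OF L1(1)]]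
      unfolding a'_def S_def by blast
    have a'c: "a' \<in> carrier G" unfolding a'_def using uc ac by simp
    have "inv g \<otimes> a \<otimes> g = inv t \<otimes> a' \<otimes> t"
      unfolding a'_def gut using uc tc ac by (simp add: inv_mult_group m_assoc)
    then have "y = cj G t (C #> a')" using ga(3) cj_coset[OF Cc a'c tc] cjC[OF tP] by simp
    moreover have "C #> a' \<in> A" unfolding A_def using a'S by blast
    ultimately show "y \<in> (\<lambda>(t, Y). cj G t Y) ` (R \<times> A)" using tR by blast
  qed
  have fX: "finite X" using XRA fR fA finite_subset by blast
  have dz: "finite {foldr (\<otimes>\<^bsub>Q\<^esub>) xs \<one>\<^bsub>Q\<^esub> | xs. set xs \<subseteq> X}"
    using group.dietzmann[OF gQ fX XQ Xcl Xtor] .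
  have gen: "\<exists>xs. set xs \<subseteq> X \<and> foldr (\<otimes>\<^bsub>Q\<^esub>) xs \<one>\<^bsub>Q\<^esub> = C #> p" if "p \<in> generate G S" for p
    using that
  proof (induction rule: generate.induct)
    case one
    then show ?case using oneQ C1 by (intro exI[of _ "[]"]) simp
  next
    case (incl h)
    have hP: "h \<in> P" using incl SP by blast
    have hc: "h \<in> carrier G" using hP Pc by blast
    have "C #> h \<in> X" unfolding X_def using incl hc by (intro CollectI exI[of _ "\<one>"] exI[of _ h]) (simp add: subgroup.one_closed[OF P])
    then show ?case using monoid.r_one[OF group.is_monoid[OF gQ] inQ[OF hP]] by (intro exI[of _ "[C #> h]"]) simp
  next
    case (inv h)
    have ih: "inv h \<in> S" using inv subgroup.m_inv_closed[OF L1(1)] subgroup.m_inv_closed[OF L2(1)]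
      unfolding S_def by blast
    have hP: "inv h \<in> P" using ih SP by blast
    have hc: "inv h \<in> carrier G" using hP Pc by blast
    have "C #> inv h \<in> X" unfolding X_def using ih hc by (intro CollectI exI[of _ "\<one>"] exI[of _ "inv h"]) (simp add: subgroup.one_closed[OF P])
    then show ?case using monoid.r_one[OF group.is_monoid[OF gQ] inQ[OF hP]] by (intro exI[of _ "[C #> inv h]"]) simp
  next
    case (eng p q)
    obtain xs where xs: "set xs \<subseteq> X" "foldr (\<otimes>\<^bsub>Q\<^esub>) xs \<one>\<^bsub>Q\<^esub> = C #> p" using eng(3) by blast
    obtain ys where ys: "set ys \<subseteq> X" "foldr (\<otimes>\<^bsub>Q\<^esub>) ys \<one>\<^bsub>Q\<^esub> = C #> q" using eng(4) by blast
    have pq: "p \<in> P" "q \<in> P" using eng(1,2) unfolding P_def by auto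
    have "foldr (\<otimes>\<^bsub>Q\<^esub>) (xs @ ys) \<one>\<^bsub>Q\<^esub> = (C #> p) \<otimes>\<^bsub>Q\<^esub> (C #> q)"
      using monoid.lprod_append[OF group.is_monoid[OF gQ], of xs ys] xs ys XQ by auto
    then show ?case using multQ[OF pq] xs ys by (intro exI[of _ "xs @ ys"]) auto
  qed
  have "{C #> x | x. x \<in> P} \<subseteq> {foldr (\<otimes>\<^bsub>Q\<^esub>) xs \<one>\<^bsub>Q\<^esub> | xs. set xs \<subseteq> X}"
  proof
    fix z assume "z \<in> {C #> x | x. x \<in> P}"
    then obtain x where x: "x \<in> P" "z = C #> x" by blast
    then obtain xs where "set xs \<subseteq> X" "foldr (\<otimes>\<^bsub>Q\<^esub>) xs \<one>\<^bsub>Q\<^esub> = C #> x" using gen unfolding P_def by blast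
    then show "z \<in> {foldr (\<otimes>\<^bsub>Q\<^esub>) xs \<one>\<^bsub>Q\<^esub> | xs. set xs \<subseteq> X}" using x by blast
  qed
  then have fPC: "fin_index G P C" unfolding fin_index_def using dz finite_subset by blast
  have fPH: "fin_index G P H" using fin_index_mono[OF C H(1) CH Pc fPC] .
  have "P = \<Union>{C #> x | x. x \<in> P}"
  proof
    show "P \<subseteq> \<Union>{C #> x | x. x \<in> P}"
    proof
      fix x assume x: "x \<in> P"
      then have "x \<in> C #> x" using rcos_self[OF _ C] Pc by blast
      then show "x \<in> \<Union>{C #> x | x. x \<in> P}" using x by blast
    qed
    show "\<Union>{C #> x | x. x \<in> P} \<subseteq> P"
    proof
      fix z assume "z \<in> \<Union>{C #> x | x. x \<in> P}"
      then obtain x c where "x \<in> P" "c \<in> C" "z = c \<otimes> x" unfolding r_coset_def by blast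
      then show "z \<in> P" using CP subgroup.m_closed[OF P] by blast
    qed
  qed
  moreover have "closedin T (\<Union>{C #> x | x. x \<in> P})"
  proof (rule closedin_Union)
    show "finite {C #> x | x. x \<in> P}" using fPC unfolding fin_index_def .
    show "\<And>Y. Y \<in> {C #> x | x. x \<in> P} \<Longrightarrow> closedin T Y" using tg_coset_closed[OF tg Ccl] Pc by blast
  qed
  ultimately have Pcl: "closedin T P" by simp
  show ?thesis using fPH Pcl NPo unfolding P_def S_def by simp
qed


lemma (in group) isolator_core:
  assumes tg: "topological_group G T" and cpt: "compact_space T" and mc: "max_cond_closed G T"
    and orb: "orbital G T H"
  shows "orbital G T (isolator G T H) \<and> H \<subseteq> isolator G T H \<and> fin_index G (isolator G T H) H
     \<and> (\<forall>L. orbital G T L \<and> H \<subseteq> L \<and> fin_index G L H \<longrightarrow> L \<subseteq> isolator G T H)"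
proof -
  define SS where "SS = {L. orbital G T L \<and> H \<subseteq> L \<and> fin_index G L H}"
  have Hs: "subgroup H G" "closedin T H" "openin T (normalizer G H)"
    using orb unfolding orbital_def closed_subgroup_def by auto
  have HSS: "H \<in> SS" unfolding SS_def using orb fin_index_self[OF Hs(1)] by simp
  have "SS \<noteq> {} \<and> (\<forall>L\<in>SS. closed_subgroup G T L)" using HSS unfolding SS_def orbital_def by auto
  then obtain M where M: "M \<in> SS" "\<forall>L\<in>SS. M \<subseteq> L \<longrightarrow> L = M"
    using mc unfolding max_cond_closed_def by meson
  have Ms: "subgroup M G" "closedin T M" "openin T (normalizer G M)" "H \<subseteq> M" "fin_index G M H"
    using M(1) unfolding SS_def orbital_def closed_subgroup_def by auto
  have big: "L \<subseteq> M" if L: "L \<in> SS" for L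
  proof -
    have Ls: "subgroup L G" "openin T (normalizer G L)" "H \<subseteq> L" "fin_index G L H"
      using L unfolding SS_def orbital_def closed_subgroup_def by auto
    define J where "J = generate G (M \<union> L)"
    have MLc: "M \<union> L \<subseteq> carrier G" using subgroup.subset[OF Ms(1)] subgroup.subset[OF Ls(1)] by blast
    have j: "fin_index G J H \<and> closedin T J \<and> openin T (normalizer G J)"
      unfolding J_def using join_lemma[OF tg cpt Hs Ms(1,3,4,5) Ls] .
    have Js: "subgroup J G" unfolding J_def using generate_is_subgroup[OF MLc] .
    have MJ: "M \<subseteq> J" and LJ: "L \<subseteq> J" unfolding J_def using generate.incl[of _ "M \<union> L" G] by blast+
    have "J \<in> SS" unfolding SS_def orbital_def closed_subgroup_def using j Js MJ Ms(4) by auto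
    then have "J = M" using M(2) MJ by blast
    then show ?thesis using LJ by simp
  qed
  have iso: "isolator G T H = M"
  proof -
    have "isolator G T H = \<Inter>{K. closed_subgroup G T K \<and> \<Union>SS \<subseteq> K}"
      unfolding isolator_def closed_generate_def SS_def by simp
    also have "\<dots> = M"
    proof
      have "M \<in> {K. closed_subgroup G T K \<and> \<Union>SS \<subseteq> K}"
        using Ms(1,2) big unfolding closed_subgroup_def by blast
      then show "\<Inter>{K. closed_subgroup G T K \<and> \<Union>SS \<subseteq> K} \<subseteq> M" by blast
      show "M \<subseteq> \<Inter>{K. closed_subgroup G T K \<and> \<Union>SS \<subseteq> K}" using M(1) by blast
    qed
    finally show ?thesis .
  qed
  show ?thesis using iso M(1) big unfolding SS_def by auto
qed

lemma (in group) isolator_isolated: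
  assumes tg: "topological_group G T" and cpt: "compact_space T" and mc: "max_cond_closed G T"
    and orb: "orbital G T H"
  shows "isolated_orbital G T (isolator G T H)"
proof -
  define M where "M = isolator G T H"
  have c: "orbital G T M" "H \<subseteq> M" "fin_index G M H"
    "\<And>L. orbital G T L \<Longrightarrow> H \<subseteq> L \<Longrightarrow> fin_index G L H \<Longrightarrow> L \<subseteq> M"
    using isolator_core[OF tg cpt mc orb] unfolding M_def by auto
  have Hs: "subgroup H G" using orb unfolding orbital_def closed_subgroup_def by auto
  have Ms: "subgroup M G" using c(1) unfolding orbital_def closed_subgroup_def by auto
  have "\<not> fin_index G H' M" if H': "orbital G T H'" "M \<subset> H'" for H'
  proof
    assume f: "fin_index G H' M"
    have H's: "subgroup H' G" using H' unfolding orbital_def closed_subgroup_def by auto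
    have "fin_index G H' H"
      using fin_index_trans[OF Hs Ms c(2) _ subgroup.subset[OF H's] f c(3)] H'(2) by blast
    then have "H' \<subseteq> M" using c(4)[OF H'(1)] c(2) H'(2) by blast
    then show False using H'(2) by blast
  qed
  then show ?thesis unfolding isolated_orbital_def M_def[symmetric] using c(1) by blast
qed

lemma (in group) normalizer_cj:
  assumes M: "M \<subseteq> carrier G" and g: "g \<in> carrier G" and n: "n \<in> normalizer G M"
  shows "inv g \<otimes> n \<otimes> g \<in> normalizer G (cj G g M)"
proof -
  have nn: "n \<in> carrier G" "\<forall>x\<in>M. n \<otimes> x \<otimes> inv n \<in> M" "\<forall>x\<in>M. inv n \<otimes> x \<otimes> n \<in> M"
    using n normalizer_iff[OF M] by auto
  have cM: "cj G g M \<subseteq> carrier G" using cj_carrier[OF M g] .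
  define k where "k = inv g \<otimes> n \<otimes> g"
  have kc: "k \<in> carrier G" unfolding k_def using nn g by simp
  have a: "k \<otimes> y \<otimes> inv k \<in> cj G g M" if y: "y \<in> cj G g M" for y
  proof -
    have yy: "y \<in> carrier G" "g \<otimes> y \<otimes> inv g \<in> M" using y cj_mem[OF M g] by auto
    have "g \<otimes> (k \<otimes> y \<otimes> inv k) \<otimes> inv g = n \<otimes> (g \<otimes> y \<otimes> inv g) \<otimes> inv n"
      unfolding k_def using yy nn g by (simp add: inv_mult_group m_assoc)
    then show ?thesis using cj_mem[OF M g] yy nn kc by simp
  qed
  have b: "inv k \<otimes> y \<otimes> k \<in> cj G g M" if y: "y \<in> cj G g M" for y
  proof -
    have yy: "y \<in> carrier G" "g \<otimes> y \<otimes> inv g \<in> M" using y cj_mem[OF M g] by auto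
    have "g \<otimes> (inv k \<otimes> y \<otimes> k) \<otimes> inv g = inv n \<otimes> (g \<otimes> y \<otimes> inv g) \<otimes> n"
      unfolding k_def using yy nn g by (simp add: inv_mult_group m_assoc)
    then show ?thesis using cj_mem[OF M g] yy nn kc by simp
  qed
  show ?thesis using normalizer_iff[OF cM] kc a b unfolding k_def by blast
qed

lemma (in group) isolator_normal:
  assumes tg: "topological_group G T" and cpt: "compact_space T" and mc: "max_cond_closed G T"
    and orb: "orbital G T H" and nH: "H \<lhd> G"
  shows "isolator G T H \<lhd> G"
proof -
  define M where "M = isolator G T H"
  have c: "orbital G T M" "H \<subseteq> M" "fin_index G M H"
    "\<And>L. orbital G T L \<Longrightarrow> H \<subseteq> L \<Longrightarrow> fin_index G L H \<Longrightarrow> L \<subseteq> M"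
    using isolator_core[OF tg cpt mc orb] unfolding M_def by auto
  have Hs: "subgroup H G" using orb unfolding orbital_def closed_subgroup_def by auto
  have Hc: "H \<subseteq> carrier G" using subgroup.subset[OF Hs] .
  have Ms: "subgroup M G" "closedin T M" "openin T (normalizer G M)"
    using c(1) unfolding orbital_def closed_subgroup_def by auto
  have Mc: "M \<subseteq> carrier G" using subgroup.subset[OF Ms(1)] .
  have nH': "\<forall>x\<in>carrier G. \<forall>h\<in>H. x \<otimes> h \<otimes> inv x \<in> H" using nH normal_inv_iff by blast
  have sub: "cj G g M \<subseteq> M" if g: "g \<in> carrier G" for g
  proof -
    have s: "subgroup (cj G g M) G" using cj_subgroup[OF Ms(1) g] .
    have cl: "closedin T (cj G g M)" using tg_cj_closed[OF tg Ms(2) g] .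
    have NMc: "normalizer G M \<subseteq> carrier G" using subgroup.subset[OF normalizer_imp_subgroup[OF Mc]] .
    have "cj G g (normalizer G M) \<subseteq> normalizer G (cj G g M)"
    proof
      fix y assume "y \<in> cj G g (normalizer G M)"
      then obtain n where "n \<in> normalizer G M" "y = inv g \<otimes> n \<otimes> g"
        unfolding cj_def[of G g "normalizer G M"] by blast
      then show "y \<in> normalizer G (cj G g M)" using normalizer_cj[OF Mc g] by simp
    qed
    moreover have "openin T (cj G g (normalizer G M))" using tg_cj_open[OF tg Ms(3) g] .
    moreover have "subgroup (cj G g (normalizer G M)) G"
      using cj_subgroup[OF normalizer_imp_subgroup[OF Mc] g] .
    ultimately have op: "openin T (normalizer G (cj G g M))"
      using tg_open_subgroup_mono[OF tg normalizer_imp_subgroup[OF cj_carrier[OF Mc g]]] by blast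
    have cjH: "cj G g H = H"
    proof
      show "cj G g H \<subseteq> H"
      proof
        fix y assume "y \<in> cj G g H"
        then obtain h where h: "h \<in> H" "y = inv g \<otimes> h \<otimes> g" unfolding cj_def by blast
        have "inv g \<otimes> h \<otimes> inv (inv g) \<in> H" using nH'[rule_format, OF inv_closed[OF g] h(1)] .
        then show "y \<in> H" using h g by simp
      qed
      show "H \<subseteq> cj G g H"
      proof
        fix h assume h: "h \<in> H"
        have "g \<otimes> h \<otimes> inv g \<in> H" using nH' h g by simp
        then show "h \<in> cj G g H" using cj_mem[OF Hc g] h Hc by blast
      qed
    qed
    have HcM: "H \<subseteq> cj G g M" using cj_mono[OF c(2), of g] cjH by simp
    have "fin_index G (cj G g M) (cj G g H)" using fin_index_cj[OF Hc Mc g c(3)] .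
    then have fi: "fin_index G (cj G g M) H" using cjH by simp
    have "orbital G T (cj G g M)" unfolding orbital_def closed_subgroup_def using s cl op by simp
    then show ?thesis using c(4) HcM fi by blast
  qed
  have "\<forall>x\<in>carrier G. \<forall>h\<in>M. x \<otimes> h \<otimes> inv x \<in> M"
  proof (intro ballI)
    fix x h assume x: "x \<in> carrier G" and h: "h \<in> M"
    have "inv (inv x) \<otimes> h \<otimes> inv x \<in> cj G (inv x) M" unfolding cj_def using h by blast
    then show "x \<otimes> h \<otimes> inv x \<in> M" using sub[OF inv_closed[OF x]] x by auto
  qed
  then show ?thesis unfolding M_def[symmetric] using normal_inv_iff Ms(1) by blast
qed

lemma (in group) normalizer_sub:
  assumes H: "subgroup H G" and K: "K \<subseteq> H"
  shows "normalizer (G\<lparr>carrier := H\<rparr>) K = H \<inter> normalizer G K"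
proof -
  have gH: "group (G\<lparr>carrier := H\<rparr>)" using subgroup_imp_group[OF H] .
  have Hc: "H \<subseteq> carrier G" using subgroup.subset[OF H] .
  have Kc: "K \<subseteq> carrier G" using K Hc by blast
  show ?thesis
  proof (intro equalityI subsetI)
    fix g assume "g \<in> normalizer (G\<lparr>carrier := H\<rparr>) K"
    then have g: "g \<in> H" "\<forall>x\<in>K. g \<otimes>\<^bsub>G\<lparr>carrier := H\<rparr>\<^esub> x \<otimes>\<^bsub>G\<lparr>carrier := H\<rparr>\<^esub> inv\<^bsub>G\<lparr>carrier := H\<rparr>\<^esub> g \<in> K"
      "\<forall>x\<in>K. inv\<^bsub>G\<lparr>carrier := H\<rparr>\<^esub> g \<otimes>\<^bsub>G\<lparr>carrier := H\<rparr>\<^esub> x \<otimes>\<^bsub>G\<lparr>carrier := H\<rparr>\<^esub> g \<in> K"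
      using group.normalizer_iff[OF gH, of K g] K by auto
    have "inv\<^bsub>G\<lparr>carrier := H\<rparr>\<^esub> g = inv g" using m_inv_consistent[OF H g(1)] .
    then show "g \<in> H \<inter> normalizer G K" using g normalizer_iff[OF Kc] Hc by auto
  next
    fix g assume g: "g \<in> H \<inter> normalizer G K"
    have i: "inv\<^bsub>G\<lparr>carrier := H\<rparr>\<^esub> g = inv g" using m_inv_consistent[OF H] g by blast
    have "\<forall>x\<in>K. g \<otimes> x \<otimes> inv g \<in> K" "\<forall>x\<in>K. inv g \<otimes> x \<otimes> g \<in> K"
      using g normalizer_iff[OF Kc] by auto
    then show "g \<in> normalizer (G\<lparr>carrier := H\<rparr>) K"
      using group.normalizer_iff[OF gH, of K g] K g i by auto
  qed
qed


lemma (in group) part_ii: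
  assumes tg: "topological_group G T" and cpt: "compact_space T" and mc: "max_cond_closed G T"
    and os: "orbitally_sound G T" and H: "closed_subgroup G T H" "fin_index G (carrier G) H"
    and K: "isolated_orbital (G\<lparr>carrier := H\<rparr>) (subtopology T H) K"
  shows "K \<lhd> (G\<lparr>carrier := H\<rparr>)"
proof -
  define Gh where "Gh = G\<lparr>carrier := H\<rparr>"
  define Th where "Th = subtopology T H"
  have Hs: "subgroup H G" "closedin T H" using H(1) unfolding closed_subgroup_def by auto
  have Hc: "H \<subseteq> carrier G" using subgroup.subset[OF Hs(1)] .
  have gGh: "group Gh" unfolding Gh_def using subgroup_imp_group[OF Hs(1)] .
  have Ho: "openin T H" using tg_closed_fin_index_open[OF tg Hs H(2)] .
  have top: "topspace T = carrier G" using tg unfolding topological_group_def by auto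
  have topH: "topspace Th = H" unfolding Th_def using top Hc by auto
  have Kis: "orbital Gh Th K" "\<forall>H'. orbital Gh Th H' \<and> K \<subset> H' \<longrightarrow> \<not> fin_index Gh H' K"
    using K unfolding isolated_orbital_def Gh_def Th_def by auto
  have KGh: "subgroup K Gh" "closedin Th K" "openin Th (normalizer Gh K)"
    using Kis(1) unfolding orbital_def closed_subgroup_def by auto
  have KH: "K \<subseteq> H" using subgroup.subset[OF KGh(1)] unfolding Gh_def by simp
  have KG: "subgroup K G" using incl_subgroup[OF Hs(1)] KGh(1) unfolding Gh_def by blast
  have Kc: "K \<subseteq> carrier G" using KH Hc by blast
  have Kcl: "closedin T K" using closedin_trans_full[OF _ Hs(2)] KGh(2) unfolding Th_def by blast
  have NGh: "normalizer Gh K = H \<inter> normalizer G K" unfolding Gh_def using normalizer_sub[OF Hs(1) KH] .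
  have "openin T (H \<inter> normalizer G K)" using openin_trans_full[OF _ Ho] KGh(3) NGh unfolding Th_def by simp
  moreover have "subgroup (H \<inter> normalizer G K) G"
    using subgroups_Inter_pair[OF Hs(1) normalizer_imp_subgroup[OF Kc]] .
  ultimately have "openin T (normalizer G K)"
    using tg_open_subgroup_mono[OF tg normalizer_imp_subgroup[OF Kc]] by blast
  then have orbK: "orbital G T K" unfolding orbital_def closed_subgroup_def using KG Kcl by simp
  define M where "M = isolator G T K"
  have c: "orbital G T M" "K \<subseteq> M" "fin_index G M K"
    using isolator_core[OF tg cpt mc orbK] unfolding M_def by auto
  have nM: "M \<lhd> G" using os isolator_isolated[OF tg cpt mc orbK] unfolding orbitally_sound_def M_def by blast
  have Ms: "subgroup M G" "closedin T M" using c(1) unfolding orbital_def closed_subgroup_def by auto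
  have nM': "\<forall>x\<in>carrier G. \<forall>h\<in>M. x \<otimes> h \<otimes> inv x \<in> M" using nM normal_inv_iff by blast
  define K' where "K' = M \<inter> H"
  have K'G: "subgroup K' G" unfolding K'_def using subgroups_Inter_pair[OF Ms(1) Hs(1)] .
  have K'H: "K' \<subseteq> H" unfolding K'_def by blast
  have K'c: "K' \<subseteq> carrier G" using K'H Hc by blast
  have K'Gh: "subgroup K' Gh" unfolding Gh_def using subgroup_incl[OF K'G Hs(1) K'H] .
  have K'cl: "closedin Th K'" unfolding Th_def K'_def closedin_subtopology using Ms(2) by blast
  have "H \<subseteq> normalizer G K'"
  proof
    fix g assume g: "g \<in> H"
    have gc: "g \<in> carrier G" using g Hc by blast
    have "\<forall>x\<in>K'. g \<otimes> x \<otimes> inv g \<in> K'"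
      using nM'[rule_format, OF gc] g subgroup.m_closed[OF Hs(1)] subgroup.m_inv_closed[OF Hs(1)]
      unfolding K'_def by blast
    moreover have "\<forall>x\<in>K'. inv g \<otimes> x \<otimes> g \<in> K'"
    proof
      fix x assume x: "x \<in> K'"
      have "inv g \<otimes> x \<otimes> inv (inv g) \<in> M" using nM'[rule_format, OF inv_closed[OF gc]] x unfolding K'_def by blast
      then have "inv g \<otimes> x \<otimes> g \<in> M" using gc by simp
      moreover have "inv g \<otimes> x \<otimes> g \<in> H"
        using x g subgroup.m_closed[OF Hs(1)] subgroup.m_inv_closed[OF Hs(1)] unfolding K'_def by blast
      ultimately show "inv g \<otimes> x \<otimes> g \<in> K'" unfolding K'_def by blast
    qed
    ultimately show "g \<in> normalizer G K'" using normalizer_iff[OF K'c] gc by blast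
  qed
  then have "normalizer Gh K' = H" unfolding Gh_def using normalizer_sub[OF Hs(1) K'H] by blast
  then have K'o: "openin Th (normalizer Gh K')" using topH by (simp add: openin_topspace[of Th, unfolded topH])
  have orbK': "orbital Gh Th K'" unfolding orbital_def closed_subgroup_def using K'Gh K'cl K'o by simp
  have KK': "K \<subseteq> K'" unfolding K'_def using c(2) KH by blast
  have "{K #> x | x. x \<in> K'} \<subseteq> {K #> x | x. x \<in> M}" unfolding K'_def by blast
  then have "fin_index G K' K" using c(3) unfolding fin_index_def using finite_subset by blast
  then have "fin_index Gh K' K" unfolding fin_index_def Gh_def by simp
  then have "\<not> K \<subset> K'" using Kis(2) orbK' by blast
  then have KeK': "K = K'" using KK' by blast
  have "\<forall>x\<in>carrier Gh. \<forall>h\<in>K. x \<otimes>\<^bsub>Gh\<^esub> h \<otimes>\<^bsub>Gh\<^esub> inv\<^bsub>Gh\<^esub> x \<in> K"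
  proof (intro ballI)
    fix x h assume x: "x \<in> carrier Gh" and h: "h \<in> K"
    have xH: "x \<in> H" using x unfolding Gh_def by simp
    have xc: "x \<in> carrier G" using xH Hc by blast
    have i: "inv\<^bsub>Gh\<^esub> x = inv x" unfolding Gh_def using m_inv_consistent[OF Hs(1) xH] .
    have hK': "h \<in> K'" using h KeK' by simp
    have "x \<otimes> h \<otimes> inv x \<in> M" using nM'[rule_format, OF xc] hK' unfolding K'_def by blast
    moreover have "x \<otimes> h \<otimes> inv x \<in> H"
      using xH hK' subgroup.m_closed[OF Hs(1)] subgroup.m_inv_closed[OF Hs(1)] unfolding K'_def by blast
    ultimately have "x \<otimes> h \<otimes> inv x \<in> K" using KeK' unfolding K'_def by blast
    then show "x \<otimes>\<^bsub>Gh\<^esub> h \<otimes>\<^bsub>Gh\<^esub> inv\<^bsub>Gh\<^esub> x \<in> K" using i unfolding Gh_def by simp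
  qed
  then show ?thesis using group.normal_inv_iff[OF gGh] KGh(1) unfolding Gh_def by blast
qed

theorem lemma1p11:
  fixes G :: "('a, 'b) monoid_scheme" and T :: "'a topology"
  assumes "profinite_group G T" and "max_cond_closed G T"
  shows "(\<forall>H. orbital G T H \<longrightarrow>
            isolated_orbital G T (isolator G T H) \<and>
            (H \<lhd> G \<longrightarrow> isolator G T H \<lhd> G))
       \<and> (orbitally_sound G T \<longrightarrow>
            (\<forall>H. closed_subgroup G T H \<and> fin_index G (carrier G) H \<longrightarrow>
                 orbitally_sound (G\<lparr>carrier := H\<rparr>) (subtopology T H)))"
proof -
  have tg: "topological_group G T" and cpt: "compact_space T"
    using assms(1) unfolding profinite_group_def by auto
  have gG: "group G" using tg unfolding topological_group_def by auto
  show ?thesis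
  proof (intro conjI allI impI)
    fix H assume "orbital G T H"
    then show "isolated_orbital G T (isolator G T H)"
      using group.isolator_isolated[OF gG tg cpt assms(2)] by blast
  next
    fix H assume "orbital G T H" "H \<lhd> G"
    then show "isolator G T H \<lhd> G" using group.isolator_normal[OF gG tg cpt assms(2)] by blast
  next
    fix H assume os: "orbitally_sound G T" and H: "closed_subgroup G T H \<and> fin_index G (carrier G) H"
    show "orbitally_sound (G\<lparr>carrier := H\<rparr>) (subtopology T H)"
      unfolding orbitally_sound_def using group.part_ii[OF gG tg cpt assms(2) os] H by blast
  qed
qed

end
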